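(* Let $N\ge1$ be an integer and $0<y<1$. Define $\eta\in\mathbb{R}$ by $-\tfrac12\eta^2=\ln[4y(1-y)]$ with $\operatorname{sign}(\eta)=\operatorname{sign}(\tfrac12-y)$ (and $\eta=0$ if $y=\tfrac12$). Then $$I_{1-y}(N,N)=\sqrt{\frac{N}{2\pi}}\;\Phi(N)\int_{-\infty}^{\eta}e^{-\frac12 N\zeta^2}\,\phi(\zeta)\,d\zeta,$$ where $$\Phi(N)=\frac{1}{\sqrt N}\,\frac{\Gamma(N+\tfrac12)}{\Gamma(N)},\qquad \phi(\zeta)=\sqrt{\frac{\tfrac12\zeta^2}{1-\exp(-\tfrac12\zeta^2)}}\ \ (\phi(0)=1),$$ the square root being positive.
   Context: $I_x(a,b)=\frac{1}{B(a,b)}\int_0^x t^{a-1}(1-t)^{b-1}dt$ is the regularized incomplete beta function, $B(a,b)=\Gamma(a)\Gamma(b)/\Gamma(a+b)$. *)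

theory Defs
  imports "HOL-Analysis.Analysis"
begin

definition inc_beta_reg :: "real \<Rightarrow> real \<Rightarrow> real \<Rightarrow> real" where
  "inc_beta_reg x a b =
     (1 / Beta a b) * (LBINT t=0..x. t powr (a - 1) * (1 - t) powr (b - 1))"

definition phiB :: "real \<Rightarrow> real" where
  "phiB z = (if z = 0 then 1 else sqrt ((z^2 / 2) / (1 - exp (- (z^2 / 2)))))"

definition PhiB :: "nat \<Rightarrow> real" where
  "PhiB N = (1 / sqrt (real N)) * (Gamma (real N + 1/2) / Gamma (real N))"

definition etaB :: "real \<Rightarrow> real" where
  "etaB y = sgn (1/2 - y) * sqrt (- 2 * ln (4 * y * (1 - y)))"

end

theory Submission
  imports Defs "HOL-Real_Asymp.Real_Asymp"
begin

lemma gamma_dup_real: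
  fixes N :: nat assumes "N \<ge> 1"
  shows "Gamma (real N) * Gamma (real N + 1/2) = 2 powr (1 - 2 * real N) * sqrt pi * Gamma (2 * real N)"
proof -
  have a: "complex_of_real (real N) \<notin> \<int>\<^sub>\<le>\<^sub>0"
  proof -
    have "real N \<notin> \<int>\<^sub>\<le>\<^sub>0" using assms by (simp add: of_nat_in_nonpos_Ints_iff)
    then show ?thesis by (metis of_real_in_nonpos_Ints_iff)
  qed
  have b: "complex_of_real (real N) + 1/2 \<notin> \<int>\<^sub>\<le>\<^sub>0"
  proof -
    have "complex_of_real (real N) + 1/2 = complex_of_real (real N + 1/2)" by simp
    moreover have "real N + 1/2 \<notin> \<int>\<^sub>\<le>\<^sub>0" using assms by (auto simp: nonpos_Ints_def)
    ultimately show ?thesis by (metis of_real_in_nonpos_Ints_iff)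
  qed
  have "Gamma (complex_of_real (real N)) * Gamma (complex_of_real (real N) + 1/2) =
             exp ((1 - 2*complex_of_real (real N)) * of_real (ln 2)) * of_real (sqrt pi) * Gamma (2*complex_of_real (real N))"
    by (rule Gamma_legendre_duplication[OF a b])
  also have "\<dots> = complex_of_real (exp ((1 - 2*real N) * ln 2) * sqrt pi * Gamma (2 * real N))"
    by (simp add: Gamma_complex_of_real[symmetric] exp_of_real[symmetric])
  finally have "complex_of_real (Gamma (real N) * Gamma (real N + 1/2)) = complex_of_real (exp ((1 - 2*real N) * ln 2) * sqrt pi * Gamma (2 * real N))"
    by (simp add: Gamma_complex_of_real[symmetric])
  then have "Gamma (real N) * Gamma (real N + 1/2) = exp ((1 - 2*real N) * ln 2) * sqrt pi * Gamma (2 * real N)"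
    by (metis of_real_eq_iff of_real_mult)
  then show ?thesis by (simp add: powr_def mult.commute)
qed

lemma const_eq:
  fixes N :: nat assumes "N \<ge> 1"
  shows "1 / Beta (real N) (real N) = sqrt (real N / (2 * pi)) * PhiB N * (4 ^ N / sqrt 2)"
proof -
  have d: "Gamma (real N) * Gamma (real N + 1/2) = 2 powr (1 - 2 * real N) * sqrt pi * Gamma (2 * real N)"
    by (rule gamma_dup_real[OF assms])
  have gp: "Gamma (real N) > 0" using assms by (intro Gamma_real_pos) auto
  have p: "(4::real) ^ N * 2 powr (1 - 2 * real N) = 2"
  proof -
    have "(4::real) ^ N = 2 powr (2 * real N)" by (simp add: powr_realpow[symmetric] powr_powr[symmetric] power_mult)
    then show ?thesis by (simp add: powr_add[symmetric])
  qed
  have sN: "sqrt (real N) > 0" using assms by simp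
  have "sqrt (real N / (2 * pi)) * PhiB N * (4 ^ N / sqrt 2)
      = Gamma (real N + 1/2) * 4 ^ N / (2 * sqrt pi * Gamma (real N))"
    using sN by (simp add: PhiB_def real_sqrt_divide real_sqrt_mult field_simps)
  also have "\<dots> = Gamma (real N) * Gamma (real N + 1/2) * 4 ^ N / (2 * sqrt pi * Gamma (real N) ^ 2)"
    using gp by (simp add: power2_eq_square field_simps)
  also have "\<dots> = Gamma (2 * real N) / Gamma (real N) ^ 2"
  proof -
    have "Gamma (real N) * Gamma (real N + 1/2) * 4 ^ N = Gamma (2 * real N) * sqrt pi * ((4::real) ^ N * 2 powr (1 - 2 * real N))"
      unfolding d by (simp add: ac_simps)
    also have "\<dots> = 2 * sqrt pi * Gamma (2 * real N)" by (simp add: p)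
    finally show ?thesis using gp by (simp add: field_simps)
  qed
  also have "\<dots> = 1 / Beta (real N) (real N)"
    by (simp add: Beta_def power2_eq_square)
  finally show ?thesis ..
qed

definition gB :: "nat \<Rightarrow> real \<Rightarrow> real" where "gB N t = (t * (1 - t)) ^ (N - 1)"
definition QB :: "nat \<Rightarrow> real \<Rightarrow> real" where "QB N x = integral {0..x} (gB N)"
definition wB :: "real \<Rightarrow> real" where "wB z = sqrt (1 - exp (- (z^2 / 2)))"
definition hB :: "nat \<Rightarrow> real \<Rightarrow> real" where "hB N z = exp (- (1/2) * real N * z^2) * phiB z"

lemma gB_cont: "continuous_on A (gB N)"
  unfolding gB_def by (intro continuous_intros)

lemma QB_deriv_within: "x \<in> {0..1} \<Longrightarrow> (QB N has_real_derivative gB N x) (at x within {0..1})"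
  unfolding QB_def[abs_def] by (rule integral_has_real_derivative[OF gB_cont])

lemma QB_deriv: "0 < x \<Longrightarrow> x < 1 \<Longrightarrow> (QB N has_real_derivative gB N x) (at x)"
proof -
  assume "0 < x" "x < 1"
  then have "(QB N has_real_derivative gB N x) (at x within {0<..<1})"
    by (intro DERIV_subset[OF QB_deriv_within]) auto
  moreover have "at x within {0<..<1} = at x"
    by (rule at_within_open) (use \<open>0 < x\<close> \<open>x < 1\<close> in auto)
  ultimately show ?thesis by simp
qed

lemma QB_cont: "continuous_on {0..1} (QB N)"
  unfolding continuous_on_eq_continuous_within
  using QB_deriv_within DERIV_continuous by blast

lemma QB_0: "QB N 0 = 0" by (simp add: QB_def)

lemma lhs_eq:
  fixes N :: nat and y :: real
  assumes "0 < y" "y < 1" "N \<ge> 1"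
  shows "inc_beta_reg (1 - y) (real N) (real N) = QB N (1 - y) / Beta (real N) (real N)"
proof -
  have "(LBINT t=0..(1-y). t powr (real N - 1) * (1 - t) powr (real N - 1)) = (LBINT t=0..(1-y). gB N t)"
  proof (rule interval_integral_cong)
    fix t assume "t \<in> einterval (min 0 (ereal (1 - y))) (max 0 (ereal (1 - y)))"
    then have t: "0 < t" "t < 1 - y" using assms by (auto simp: einterval_iff min_def max_def split: if_splits)
    then have "t powr (real N - 1) = t ^ (N - 1)" "(1 - t) powr (real N - 1) = (1 - t) ^ (N - 1)"
      using assms by (auto simp: powr_realpow[symmetric] of_nat_diff)
    then show "t powr (real N - 1) * (1 - t) powr (real N - 1) = gB N t"
      by (simp add: gB_def power_mult_distrib)
  qed
  also have "\<dots> = QB N (1 - y) - QB N 0"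
  proof -
  have "(LBINT t=ereal 0..ereal (1-y). gB N t) = QB N (1 - y) - QB N 0"
  proof (rule interval_integral_FTC_finite)
    show "continuous_on {min 0 (1 - y)..max 0 (1 - y)} (gB N)" by (rule gB_cont)
    fix x assume "min 0 (1 - y) \<le> x" "x \<le> max 0 (1 - y)"
    then have x: "x \<in> {0..1}" using assms by auto
    have sub: "{min 0 (1 - y)..max 0 (1 - y)} \<subseteq> {0..1}" using assms by auto
    have "(QB N has_real_derivative gB N x) (at x within {min 0 (1 - y)..max 0 (1 - y)})"
      by (rule DERIV_subset[OF QB_deriv_within[OF x] sub])
    then show "(QB N has_vector_derivative gB N x) (at x within {min 0 (1 - y)..max 0 (1 - y)})"
      unfolding has_real_derivative_iff_has_vector_derivative .
  qed
  then show ?thesis by (simp add: zero_ereal_def)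
  qed
  finally show ?thesis by (simp add: inc_beta_reg_def QB_0)
qed

lemma wB_bounds: "z \<noteq> 0 \<Longrightarrow> 0 < wB z \<and> wB z < 1"
  unfolding wB_def by auto

lemma wB_0: "wB 0 = 0" by (simp add: wB_def)

lemma wB_ge: "0 \<le> wB z" "wB z < 1"
  unfolding wB_def by auto

lemma wB_deriv: "z \<noteq> 0 \<Longrightarrow> (wB has_real_derivative (z * exp (- (z^2/2)) / (2 * wB z))) (at z)"
proof -
  assume z: "z \<noteq> 0"
  have pos: "0 < 1 - exp (- (z^2/2))" using z by simp
  have "((\<lambda>z. 1 - exp (- (z^2/2))) has_real_derivative (z * exp (- (z^2/2)))) (at z)"
    by (auto intro!: derivative_eq_intros)
  from DERIV_real_sqrt[OF pos] this
  have "((\<lambda>z. sqrt (1 - exp (- (z^2/2)))) has_real_derivative inverse (sqrt (1 - exp (- (z^2/2)))) / 2 * (z * exp (- (z^2/2)))) (at z)"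
    by (rule DERIV_chain2)
  then show ?thesis unfolding wB_def[abs_def] by (simp add: field_simps)
qed

lemma wB_cont: "continuous_on UNIV wB"
  unfolding wB_def[abs_def] by (intro continuous_intros) auto

lemma phiB_alt: "z \<noteq> 0 \<Longrightarrow> phiB z = \<bar>z\<bar> / (sqrt 2 * wB z)"
proof -
  assume z: "z \<noteq> 0"
  have "(z^2 / 2) / (1 - exp (- (z^2 / 2))) = z^2 / (2 * (1 - exp (- (z^2 / 2))))" by simp
  then have "phiB z = sqrt (z^2) / sqrt (2 * (1 - exp (- (z^2 / 2))))"
    using z by (simp only: phiB_def if_False real_sqrt_divide)
  then show ?thesis by (simp only: real_sqrt_abs real_sqrt_mult wB_def)
qed

lemma gB_w: "gB N ((1 + s * wB z) / 2) = (exp (- (z^2/2)) / 4) ^ (N - 1)" if "s = 1 \<or> s = -1"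
proof -
  have w2: "(wB z)^2 = 1 - exp (- (z^2/2))" unfolding wB_def by simp
  have "(1 + s * wB z) / 2 * (1 - (1 + s * wB z) / 2) = (1 - s^2 * (wB z)^2) / 4"
    by (simp add: field_simps power2_eq_square)
  also have "\<dots> = exp (- (z^2/2)) / 4" using that w2 by auto
  finally have h: "(1 + s * wB z) / 2 * (1 - (1 + s * wB z) / 2) = exp (- (z^2/2)) / 4" .
  show ?thesis by (simp only: gB_def h)
qed

lemma core_alg:
  assumes z: "z \<noteq> 0" and N: "N \<ge> 1"
  shows "(4 ^ N / sqrt 2) * ((exp (- (z^2/2)) / 4) ^ (N - 1) * (\<bar>z\<bar> * exp (- (z^2/2)) / (4 * wB z))) = hB N z"
proof -
  define e where "e = exp (- (z^2/2))"
  have wpos: "wB z > 0" using wB_bounds[OF z] by auto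
  have eN: "exp (- (1/2) * real N * z^2) = e ^ N"
    unfolding e_def exp_of_nat_mult[symmetric] by (simp add: algebra_simps)
  have p1: "e ^ (N - 1) * e = e ^ N" using N by (simp add: power_Suc2[symmetric])
  have p2: "(4::real) ^ (N - 1) * 4 = 4 ^ N" using N by (simp add: power_Suc2[symmetric])
  have "(4 ^ N / sqrt 2) * ((e / 4) ^ (N - 1) * (\<bar>z\<bar> * e / (4 * wB z)))
      = (e ^ (N - 1) * e) * \<bar>z\<bar> * 4 ^ N / (sqrt 2 * wB z * (4 ^ (N - 1) * 4))"
    by (simp add: power_divide field_simps)
  also have "\<dots> = e ^ N * \<bar>z\<bar> / (sqrt 2 * wB z)"
    unfolding p1 p2 using wpos by (simp add: field_simps)
  also have "\<dots> = hB N z" unfolding hB_def eN phiB_alt[OF z] by simp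
  finally show ?thesis unfolding e_def .
qed

definition Fm :: "nat \<Rightarrow> real \<Rightarrow> real" where "Fm N z = (4 ^ N / sqrt 2) * QB N ((1 - wB z) / 2)"
definition Fp :: "nat \<Rightarrow> real \<Rightarrow> real" where "Fp N z = (4 ^ N / sqrt 2) * QB N ((1 + wB z) / 2)"

lemma Fm_deriv: assumes "z < 0" "N \<ge> 1" shows "(Fm N has_real_derivative hB N z) (at z)"
proof -
  have z: "z \<noteq> 0" using assms by auto
  have b: "0 < (1 - wB z) / 2" "(1 - wB z) / 2 < 1" using wB_bounds[OF z] by auto
  have d1: "((\<lambda>z. (1 - wB z) / 2) has_real_derivative (- (z * exp (- (z^2/2)) / (2 * wB z)) / 2)) (at z)"
    by (auto intro!: derivative_eq_intros wB_deriv[OF z])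
  have "((\<lambda>z. QB N ((1 - wB z) / 2)) has_real_derivative gB N ((1 - wB z) / 2) * ((- (z * exp (- (z^2/2)) / (2 * wB z)) / 2))) (at z)"
    by (rule DERIV_chain2[OF QB_deriv[OF b] d1])
  then have "(Fm N has_real_derivative (4 ^ N / sqrt 2) * (gB N ((1 - wB z) / 2) * ((- (z * exp (- (z^2/2)) / (2 * wB z)) / 2)))) (at z)"
    unfolding Fm_def[abs_def] by (rule DERIV_cmult)
  moreover have "(4 ^ N / sqrt 2) * (gB N ((1 - wB z) / 2) * ((- (z * exp (- (z^2/2)) / (2 * wB z)) / 2))) = hB N z"
  proof -
    have "gB N ((1 - wB z) / 2) = (exp (- (z^2/2)) / 4) ^ (N - 1)"
      using gB_w[of "-1" N z] by simp
    moreover have "(- (z * exp (- (z^2/2)) / (2 * wB z)) / 2) = \<bar>z\<bar> * exp (- (z^2/2)) / (4 * wB z)"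
      using assms by simp
    ultimately show ?thesis using core_alg[OF z assms(2)] by simp
  qed
  ultimately show ?thesis by simp
qed

lemma Fp_deriv: assumes "z > 0" "N \<ge> 1" shows "(Fp N has_real_derivative hB N z) (at z)"
proof -
  have z: "z \<noteq> 0" using assms by auto
  have b: "0 < (1 + wB z) / 2" "(1 + wB z) / 2 < 1" using wB_bounds[OF z] by auto
  have d1: "((\<lambda>z. (1 + wB z) / 2) has_real_derivative ((z * exp (- (z^2/2)) / (2 * wB z)) / 2)) (at z)"
    by (auto intro!: derivative_eq_intros wB_deriv[OF z])
  have "((\<lambda>z. QB N ((1 + wB z) / 2)) has_real_derivative gB N ((1 + wB z) / 2) * (((z * exp (- (z^2/2)) / (2 * wB z)) / 2))) (at z)"
    by (rule DERIV_chain2[OF QB_deriv[OF b] d1])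
  then have "(Fp N has_real_derivative (4 ^ N / sqrt 2) * (gB N ((1 + wB z) / 2) * (((z * exp (- (z^2/2)) / (2 * wB z)) / 2)))) (at z)"
    unfolding Fp_def[abs_def] by (rule DERIV_cmult)
  moreover have "(4 ^ N / sqrt 2) * (gB N ((1 + wB z) / 2) * (((z * exp (- (z^2/2)) / (2 * wB z)) / 2))) = hB N z"
  proof -
    have "gB N ((1 + wB z) / 2) = (exp (- (z^2/2)) / 4) ^ (N - 1)"
      using gB_w[of "1" N z] by simp
    moreover have az: "\<bar>z\<bar> = z" using assms by simp
    ultimately show ?thesis using core_alg[OF z assms(2)] by (simp add: az)
  qed
  ultimately show ?thesis by simp
qed

lemma Fm_cont: "isCont (Fm N) z"
proof -
  have b: "0 < (1 - wB z) / 2" "(1 - wB z) / 2 < 1" using wB_ge[of z] by auto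
  have "isCont (\<lambda>z. (1 - wB z) / 2) z"
    using wB_cont by (intro continuous_intros) (auto simp add: continuous_on_eq_continuous_at)
  moreover have "isCont (QB N) ((1 - wB z) / 2)" using DERIV_isCont[OF QB_deriv[OF b]] .
  ultimately have "isCont (\<lambda>z. QB N ((1 - wB z) / 2)) z" by (rule isCont_o2)
  then show ?thesis unfolding Fm_def[abs_def] by (intro continuous_intros)
qed

lemma Fp_cont: "isCont (Fp N) z"
proof -
  have b: "0 < (1 + wB z) / 2" "(1 + wB z) / 2 < 1" using wB_ge[of z] by auto
  have "isCont (\<lambda>z. (1 + wB z) / 2) z"
    using wB_cont by (intro continuous_intros) (auto simp add: continuous_on_eq_continuous_at)
  moreover have "isCont (QB N) ((1 + wB z) / 2)" using DERIV_isCont[OF QB_deriv[OF b]] .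
  ultimately have "isCont (\<lambda>z. QB N ((1 + wB z) / 2)) z" by (rule isCont_o2)
  then show ?thesis unfolding Fp_def[abs_def] by (intro continuous_intros)
qed

lemma Fm_Fp_0: "Fm N 0 = Fp N 0" by (simp add: Fm_def Fp_def wB_0)

lemma Fm_lim: "(Fm N \<longlongrightarrow> 0) at_bot"
proof -
  have t: "((\<lambda>z. (1 - wB z) / 2) \<longlongrightarrow> 0) at_bot"
    unfolding wB_def by real_asymp
  have "filterlim (\<lambda>z. (1 - wB z) / 2) (at 0 within {0..1}) at_bot"
  proof -
    have "\<forall>z. (1 - wB z) / 2 \<in> {0..1} \<and> (1 - wB z) / 2 \<noteq> 0"
    proof
      fix z have "0 \<le> wB z" "wB z < 1" by (rule wB_ge)+
      then show "(1 - wB z) / 2 \<in> {0..1} \<and> (1 - wB z) / 2 \<noteq> 0" by auto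
    qed
    then show ?thesis unfolding filterlim_at using t by (auto intro!: always_eventually)
  qed
  moreover have "(QB N \<longlongrightarrow> QB N 0) (at 0 within {0..1})"
    using QB_cont by (simp add: continuous_on_def)
  ultimately have "((\<lambda>z. QB N ((1 - wB z) / 2)) \<longlongrightarrow> QB N 0) at_bot"
    by (rule filterlim_compose[rotated])
  then have "(Fm N \<longlongrightarrow> (4 ^ N / sqrt 2) * QB N 0) at_bot"
    unfolding Fm_def[abs_def] by (intro tendsto_intros)
  then show ?thesis by (simp add: QB_0)
qed

lemma hB_nonneg: "0 \<le> hB N z"
  unfolding hB_def phiB_def by auto

lemma hB_cont: "z \<noteq> 0 \<Longrightarrow> isCont (hB N) z"
proof -
  assume z: "z \<noteq> 0"
  have ev: "eventually (\<lambda>x. hB N x = exp (- (1/2) * real N * x^2) * sqrt ((x^2 / 2) / (1 - exp (- (x^2 / 2))))) (nhds z)"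
  proof -
    have "eventually (\<lambda>x. x \<noteq> 0) (nhds z)" using z by (rule t1_space_nhds)
    then show ?thesis by eventually_elim (simp add: hB_def phiB_def)
  qed
  have "isCont (\<lambda>x. exp (- (1/2) * real N * x^2) * sqrt ((x^2 / 2) / (1 - exp (- (x^2 / 2))))) z"
    using z by (intro continuous_intros) auto
  then show ?thesis using isCont_cong[OF ev] by simp
qed

lemma eta_facts:
  assumes "0 < y" "y < 1"
  shows "wB (etaB y) = \<bar>1 - 2*y\<bar>"
    and "y < 1/2 \<Longrightarrow> etaB y > 0"
    and "y > 1/2 \<Longrightarrow> etaB y < 0"
    and "y = 1/2 \<Longrightarrow> etaB y = 0"
proof -
  have p: "0 < 4*y*(1-y)" using assms by auto
  have q: "4*y*(1-y) \<le> 1" proof - have "0 \<le> (1 - 2*y)^2" by simp thus ?thesis by (simp add: power2_eq_square algebra_simps) qed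
  have lnle: "ln (4*y*(1-y)) \<le> 0" using p q by simp
  have e: "exp (- ((etaB y)^2 / 2)) = 4*y*(1-y)"
  proof (cases "y = 1/2")
    case True show ?thesis unfolding True etaB_def by simp
  next
    case False
    then have "(sgn (1/2 - y))^2 = 1" by (auto simp: sgn_if)
    then have "(etaB y)^2 = - 2 * ln (4*y*(1-y))" using lnle
      by (simp add: etaB_def power_mult_distrib)
    then show ?thesis using p by simp
  qed
  have "1 - 4*y*(1-y) = (1 - 2*y)^2" by (simp add: power2_eq_square algebra_simps)
  then show "wB (etaB y) = \<bar>1 - 2*y\<bar>" unfolding wB_def e by simp
  show "y < 1/2 \<Longrightarrow> etaB y > 0"
  proof -
    assume y: "y < 1/2"
    have "4*y*(1-y) < 1" proof - have "0 < (1 - 2*y)^2" using y by simp thus ?thesis by (simp add: power2_eq_square algebra_simps) qed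
    then have "ln (4*y*(1-y)) < 0" using p by simp
    then show ?thesis using y by (simp add: etaB_def)
  qed
  show "y > 1/2 \<Longrightarrow> etaB y < 0"
  proof -
    assume y: "y > 1/2"
    have "4*y*(1-y) < 1" proof - have "0 < (1 - 2*y)^2" using y by simp thus ?thesis by (simp add: power2_eq_square algebra_simps) qed
    then have "ln (4*y*(1-y)) < 0" using p by simp
    then show ?thesis using y by (simp add: etaB_def)
  qed
  show "y = 1/2 \<Longrightarrow> etaB y = 0"
  proof -
    assume h: "y = 1/2" show ?thesis unfolding h etaB_def by simp
  qed
qed

lemma ftc_neg:
  fixes u :: real and N :: nat
  assumes "u \<le> 0" "N \<ge> 1"
  shows "set_integrable lborel (einterval (-\<infinity>) (ereal u)) (hB N)"
    "(LBINT x=-\<infinity>..ereal u. hB N x) = Fm N u - 0"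
proof -
  have A: "((Fm N \<circ> real_of_ereal) \<longlongrightarrow> 0) (at_right (-\<infinity>))"
    unfolding ereal_tendsto_simps1 by (rule Fm_lim)
  have B: "((Fm N \<circ> real_of_ereal) \<longlongrightarrow> Fm N u) (at_left (ereal u))"
    unfolding ereal_tendsto_simps1 using Fm_cont[of u N] by (simp add: isCont_def filterlim_at_split)
  have d: "\<And>x. - \<infinity> < ereal x \<Longrightarrow> ereal x < ereal u \<Longrightarrow> DERIV (Fm N) x :> hB N x"
    using assms by (intro Fm_deriv) auto
  have c: "\<And>x. - \<infinity> < ereal x \<Longrightarrow> ereal x < ereal u \<Longrightarrow> isCont (hB N) x"
    using assms by (intro hB_cont) auto
  show "set_integrable lborel (einterval (-\<infinity>) (ereal u)) (hB N)"
    "(LBINT x=-\<infinity>..ereal u. hB N x) = Fm N u - 0"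
    using interval_integral_FTC_nonneg[OF _ d c _ A B] by (auto simp: hB_nonneg)
qed

lemma ftc_pos:
  fixes u :: real and N :: nat
  assumes "u > 0" "N \<ge> 1"
  shows "set_integrable lborel (einterval (ereal 0) (ereal u)) (hB N)"
    "(LBINT x=ereal 0..ereal u. hB N x) = Fp N u - Fp N 0"
proof -
  have A: "((Fp N \<circ> real_of_ereal) \<longlongrightarrow> Fp N 0) (at_right (ereal 0))"
    unfolding ereal_tendsto_simps1 using Fp_cont[of 0 N] by (simp add: isCont_def filterlim_at_split)
  have B: "((Fp N \<circ> real_of_ereal) \<longlongrightarrow> Fp N u) (at_left (ereal u))"
    unfolding ereal_tendsto_simps1 using Fp_cont[of u N] by (simp add: isCont_def filterlim_at_split)
  have d: "\<And>x. ereal 0 < ereal x \<Longrightarrow> ereal x < ereal u \<Longrightarrow> DERIV (Fp N) x :> hB N x"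
    using assms by (intro Fp_deriv) auto
  have c: "\<And>x. ereal 0 < ereal x \<Longrightarrow> ereal x < ereal u \<Longrightarrow> isCont (hB N) x"
    using assms by (intro hB_cont) auto
  show "set_integrable lborel (einterval (ereal 0) (ereal u)) (hB N)"
    "(LBINT x=ereal 0..ereal u. hB N x) = Fp N u - Fp N 0"
    using interval_integral_FTC_nonneg[OF _ d c _ A B] assms by (auto simp: hB_nonneg)
qed

lemma einterval_MInf: "einterval (-\<infinity>) (ereal a) = {..<a}"
  by (auto simp: einterval_iff)

lemma einterval_fin: "einterval (ereal a) (ereal b) = {a<..<b}"
  by (auto simp: einterval_iff)

lemma integral_Iic:
  fixes u :: real and N :: nat
  assumes "N \<ge> 1"
  shows "(LBINT z:{..u}. hB N z) = (if u \<le> 0 then Fm N u else Fp N u)"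
proof (cases "u \<le> 0")
  case True
  have "(LBINT z:{..u}. hB N z) = (LBINT z:{..<u}. hB N z)"
    by (rule set_integral_discrete_difference[where X="{u}"]) auto
  also have "\<dots> = (LBINT x=-\<infinity>..ereal u. hB N x)"
    by (simp add: interval_lebesgue_integral_def einterval_MInf)
  also have "\<dots> = Fm N u" using ftc_neg[OF True assms] by simp
  finally show ?thesis using True by simp
next
  case False
  then have e: "u > 0" by simp
  have i1: "set_integrable lborel {..<0} (hB N)"
    using ftc_neg(1)[of 0 N] assms by (simp add: einterval_MInf)
  have i2: "set_integrable lborel {0<..<u} (hB N)"
    using ftc_pos(1)[OF e assms] by (simp add: einterval_fin)
  have "(LBINT z:{..u}. hB N z) = (LBINT z:({..<0} \<union> {0<..<u}). hB N z)"
    by (rule set_integral_discrete_difference[where X="{0, u}"]) (use e in auto)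
  also have "\<dots> = (LBINT z:{..<0}. hB N z) + (LBINT z:{0<..<u}. hB N z)"
    by (rule set_integral_Un[OF _ i1 i2]) auto
  also have "(LBINT z:{..<0}. hB N z) = Fm N 0"
    using ftc_neg(2)[of 0 N] assms by (simp add: interval_lebesgue_integral_def einterval_MInf)
  also have "(LBINT z:{0<..<u}. hB N z) = Fp N u - Fp N 0"
    using ftc_pos(2)[OF e assms] e by (simp add: interval_lebesgue_integral_def einterval_fin)
  finally show ?thesis using e Fm_Fp_0[of N] by simp
qed

theorem mainTheorem3:
  fixes N :: nat and y :: real
  assumes "N \<ge> 1" and "0 < y" and "y < 1"
  shows "inc_beta_reg (1 - y) (real N) (real N) =
           sqrt (real N / (2 * pi)) * PhiB N *
           (LBINT z:{..etaB y}. exp (- (1/2) * real N * z^2) * phiB z)"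
proof -
  have I: "(LBINT z:{..etaB y}. exp (- (1/2) * real N * z^2) * phiB z) = (4 ^ N / sqrt 2) * QB N (1 - y)"
  proof -
    have "(LBINT z:{..etaB y}. exp (- (1/2) * real N * z^2) * phiB z) = (LBINT z:{..etaB y}. hB N z)"
      by (simp add: hB_def)
    also have "\<dots> = (if etaB y \<le> 0 then Fm N (etaB y) else Fp N (etaB y))"
      by (rule integral_Iic[OF assms(1)])
    also have "\<dots> = (4 ^ N / sqrt 2) * QB N (1 - y)"
    proof (cases "y < 1/2")
      case True
      then have "etaB y > 0" "wB (etaB y) = 1 - 2*y" using eta_facts[OF assms(2,3)] by auto
      then have eq: "(1 + wB (etaB y)) / 2 = 1 - y" by simp
      have "Fp N (etaB y) = (4 ^ N / sqrt 2) * QB N (1 - y)" unfolding Fp_def by (simp only: eq)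
      then show ?thesis using \<open>etaB y > 0\<close> by simp
    next
      case False
      then have "etaB y \<le> 0" "wB (etaB y) = 2*y - 1" using eta_facts[OF assms(2,3)]
        by (cases "y = 1/2"; auto)+
      then have eq: "(1 - wB (etaB y)) / 2 = 1 - y" by simp
      have "Fm N (etaB y) = (4 ^ N / sqrt 2) * QB N (1 - y)" unfolding Fm_def by (simp only: eq)
      then show ?thesis using \<open>etaB y \<le> 0\<close> by simp
    qed
    finally show ?thesis .
  qed
  have "QB N (1 - y) / Beta (real N) (real N) = QB N (1 - y) * (1 / Beta (real N) (real N))" by simp
  also have "\<dots> = QB N (1 - y) * (sqrt (real N / (2 * pi)) * PhiB N * (4 ^ N / sqrt 2))"
    by (simp only: const_eq[OF assms(1)])
  also have "\<dots> = sqrt (real N / (2 * pi)) * PhiB N * ((4 ^ N / sqrt 2) * QB N (1 - y))"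
    by (simp only: ac_simps)
  finally show ?thesis
    unfolding I lhs_eq[OF assms(2,3,1)] .
qed

end
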